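(* Let $\psi\in(\operatorname{Lie}N)^*$ and suppose a metaplectic cover of $S_{\rho_\psi}$ exists. For any smooth representation $\pi$ of $G$ on $V$, the subspace \[\bigcap_{f\in\operatorname{Hom}_N(\pi,\rho_\psi)}\ker f\subset V\] is stable under the action of $R_{\rho_\psi}:=S_{\rho_\psi}\ltimes N$ (acting through $R_{\rho_\psi}\subset P\subset G$); hence the largest $\rho_\psi$-isotypic quotient $\pi_{N,\rho_\psi}=V/\bigcap_f\ker f$ carries a natural action of $R_{\rho_\psi}$.
   Context: $p$ odd prime, $F$ finite extension of $\mathbb{Q}_p$, $\varepsilon$ normalized nontrivial unitary additive character. $\mathbf G$ reductive over $F$, $\mathbf P=\mathbf M\mathbf N$ parabolic with Levi decomposition, $G,P,M,N$ their $F$-points. Kirillov: $\rho_\psi=\operatorname{Ind}_H^N\chi_\psi$ ($H=\exp\mathfrak h$, $\mathfrak h$ maximal Lie subalgebra with $\psi([\mathfrak h,\mathfrak h])=0$, $\chi_\psi=\varepsilon\circ\psi\circ\log$), irreducible smooth admissible unitary. $S_{\rho_\psi}\le M$ is the identity component of the stabilizer of the isomorphism class of $\rho_\psi$ under $(m\cdot\rho)(n)=\rho(m^{-1}nm)$. A metaplectic cover is a central extension $1\to\mu_n\to\widehat S\to S_{\rho_\psi}\to1$ of minimal degree such that $\rho_\psi$ extends to a smooth representation of $\widehat S\ltimes N$. *)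

theory Defs
  imports "HOL-Algebra.Algebra" "HOL-Analysis.Analysis"
begin

definition is_rep ::
  "('g, 'm) monoid_scheme \<Rightarrow> (complex \<Rightarrow> 'v::ab_group_add \<Rightarrow> 'v) \<Rightarrow> ('g \<Rightarrow> 'v \<Rightarrow> 'v) \<Rightarrow> bool" where
  "is_rep G sV \<pi> \<longleftrightarrow> group G \<and> vector_space sV \<and>
     (\<forall>g\<in>carrier G. Vector_Spaces.linear sV sV (\<pi> g)) \<and>
     \<pi> \<one>\<^bsub>G\<^esub> = id \<and>
     (\<forall>g\<in>carrier G. \<forall>h\<in>carrier G. \<pi> (g \<otimes>\<^bsub>G\<^esub> h) = \<pi> g \<circ> \<pi> h)"

definition conj_rep :: "('g, 'm) monoid_scheme \<Rightarrow> 'g \<Rightarrow> ('g \<Rightarrow> 'w \<Rightarrow> 'w) \<Rightarrow> 'g \<Rightarrow> 'w \<Rightarrow> 'w" where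
  "conj_rep G m \<rho> = (\<lambda>n. \<rho> (inv\<^bsub>G\<^esub> m \<otimes>\<^bsub>G\<^esub> n \<otimes>\<^bsub>G\<^esub> m))"

definition iso_rep ::
  "('g, 'm) monoid_scheme \<Rightarrow> (complex \<Rightarrow> 'w::ab_group_add \<Rightarrow> 'w) \<Rightarrow> ('g \<Rightarrow> 'w \<Rightarrow> 'w) \<Rightarrow> ('g \<Rightarrow> 'w \<Rightarrow> 'w) \<Rightarrow> bool" where
  "iso_rep H sW \<rho>1 \<rho>2 \<longleftrightarrow> (\<exists>T. Vector_Spaces.linear sW sW T \<and> bij T \<and>
       (\<forall>n\<in>carrier H. T \<circ> \<rho>1 n = \<rho>2 n \<circ> T))"

definition rep_stabilizer ::
  "('g, 'm) monoid_scheme \<Rightarrow> 'g set \<Rightarrow> 'g set \<Rightarrow> (complex \<Rightarrow> 'w::ab_group_add \<Rightarrow> 'w) \<Rightarrow> ('g \<Rightarrow> 'w \<Rightarrow> 'w) \<Rightarrow> 'g set" where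
  "rep_stabilizer G M N sW \<rho> = {m \<in> M. iso_rep (G\<lparr>carrier := N\<rparr>) sW (conj_rep G m \<rho>) \<rho>}"

definition hom_N ::
  "'g set \<Rightarrow> (complex \<Rightarrow> 'v::ab_group_add \<Rightarrow> 'v) \<Rightarrow> ('g \<Rightarrow> 'v \<Rightarrow> 'v) \<Rightarrow>
   (complex \<Rightarrow> 'w::ab_group_add \<Rightarrow> 'w) \<Rightarrow> ('g \<Rightarrow> 'w \<Rightarrow> 'w) \<Rightarrow> ('v \<Rightarrow> 'w) set" where
  "hom_N N sV \<pi> sW \<rho> = {f. Vector_Spaces.linear sV sW f \<and> (\<forall>n\<in>N. \<forall>v. f (\<pi> n v) = \<rho> n (f v))}"

definition common_kernel ::
  "'g set \<Rightarrow> (complex \<Rightarrow> 'v::ab_group_add \<Rightarrow> 'v) \<Rightarrow> ('g \<Rightarrow> 'v \<Rightarrow> 'v) \<Rightarrow>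
   (complex \<Rightarrow> 'w::ab_group_add \<Rightarrow> 'w) \<Rightarrow> ('g \<Rightarrow> 'w \<Rightarrow> 'w) \<Rightarrow> 'v set" where
  "common_kernel N sV \<pi> sW \<rho> = {v. \<forall>f\<in>hom_N N sV \<pi> sW \<rho>. f v = 0}"

text \<open>Metaplectic cover data: a central extension q : Sh -> S with finite cyclic kernel
  such that rho extends to a representation rhoh of the semidirect product Sh x| N, whose
  multiplication is (s1,n1)(s2,n2) = (s1 s2, q(s2)^-1 n1 q(s2) n2).\<close>
definition metaplectic_cover ::
  "('g, 'm) monoid_scheme \<Rightarrow> 'g set \<Rightarrow> 'g set \<Rightarrow> (complex \<Rightarrow> 'w::ab_group_add \<Rightarrow> 'w) \<Rightarrow>
   ('g \<Rightarrow> 'w \<Rightarrow> 'w) \<Rightarrow> ('h, 'k) monoid_scheme \<Rightarrow> ('h \<Rightarrow> 'g) \<Rightarrow> ('h \<times> 'g \<Rightarrow> 'w \<Rightarrow> 'w) \<Rightarrow> bool" where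
  "metaplectic_cover G S N sW \<rho> Sh q \<rho>h \<longleftrightarrow>
     group Sh \<and> q \<in> hom Sh (G\<lparr>carrier := S\<rparr>) \<and> q ` carrier Sh = S \<and>
     finite (kernel Sh (G\<lparr>carrier := S\<rparr>) q) \<and>
     (\<exists>z\<in>carrier Sh. kernel Sh (G\<lparr>carrier := S\<rparr>) q = {z [^]\<^bsub>Sh\<^esub> (k::nat) | k. True}) \<and>
     (\<forall>z\<in>kernel Sh (G\<lparr>carrier := S\<rparr>) q. \<forall>x\<in>carrier Sh. z \<otimes>\<^bsub>Sh\<^esub> x = x \<otimes>\<^bsub>Sh\<^esub> z) \<and>
     (\<forall>s\<in>carrier Sh. \<forall>n\<in>N. Vector_Spaces.linear sW sW (\<rho>h (s, n))) \<and>
     (\<forall>n\<in>N. \<rho>h (\<one>\<^bsub>Sh\<^esub>, n) = \<rho> n) \<and>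
     (\<forall>s1\<in>carrier Sh. \<forall>n1\<in>N. \<forall>s2\<in>carrier Sh. \<forall>n2\<in>N.
        \<rho>h (s1, n1) \<circ> \<rho>h (s2, n2) =
        \<rho>h (s1 \<otimes>\<^bsub>Sh\<^esub> s2, inv\<^bsub>G\<^esub> (q s2) \<otimes>\<^bsub>G\<^esub> n1 \<otimes>\<^bsub>G\<^esub> q s2 \<otimes>\<^bsub>G\<^esub> n2))"

end

theory Submission
  imports Defs
begin

lemma lin0: "Vector_Spaces.linear s1 s2 f \<Longrightarrow> f 0 = 0"
  unfolding Vector_Spaces.linear_def using module_hom.zero by blast

theorem lemma4p8:
  fixes G :: "('g, 'm) monoid_scheme"
    and N M S :: "'g set"
    and sV :: "complex \<Rightarrow> 'v::ab_group_add \<Rightarrow> 'v" and \<pi> :: "'g \<Rightarrow> 'v \<Rightarrow> 'v"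
    and sW :: "complex \<Rightarrow> 'w::ab_group_add \<Rightarrow> 'w" and \<rho> :: "'g \<Rightarrow> 'w \<Rightarrow> 'w"
    and Sh :: "('h, 'k) monoid_scheme" and q :: "'h \<Rightarrow> 'g" and \<rho>h :: "'h \<times> 'g \<Rightarrow> 'w \<Rightarrow> 'w"
  assumes "group G"
    and "subgroup N G" and "subgroup M G"
    and "\<forall>m\<in>M. \<forall>n\<in>N. m \<otimes>\<^bsub>G\<^esub> n \<otimes>\<^bsub>G\<^esub> inv\<^bsub>G\<^esub> m \<in> N"
    and "is_rep G sV \<pi>"
    and "is_rep (G\<lparr>carrier := N\<rparr>) sW \<rho>"
    and "subgroup S G" and "S \<subseteq> rep_stabilizer G M N sW \<rho>"
    and "metaplectic_cover G S N sW \<rho> Sh q \<rho>h"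
  shows "\<forall>s\<in>S. \<forall>n\<in>N. \<forall>v\<in>common_kernel N sV \<pi> sW \<rho>.
           \<pi> (s \<otimes>\<^bsub>G\<^esub> n) v \<in> common_kernel N sV \<pi> sW \<rho>"
proof (intro ballI)
  fix s n v
  assume s: "s \<in> S" and n: "n \<in> N" and v: "v \<in> common_kernel N sV \<pi> sW \<rho>"
  interpret G: group G by fact
  have sG: "s \<in> carrier G" using subgroup.subset[OF assms(7)] s by (rule subsetD)
  have NG: "N \<subseteq> carrier G" by (rule subgroup.subset[OF assms(2)])
  have sM: "s \<in> M" using s assms(8) unfolding rep_stabilizer_def by auto
  have si: "inv\<^bsub>G\<^esub> s \<in> S" by (rule subgroup.m_inv_closed[OF assms(7) s])
  have piG: "\<forall>g\<in>carrier G. Vector_Spaces.linear sV sV (\<pi> g)"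
    and pimul: "\<forall>g\<in>carrier G. \<forall>h\<in>carrier G. \<pi> (g \<otimes>\<^bsub>G\<^esub> h) = \<pi> g \<circ> \<pi> h"
    using assms(5) unfolding is_rep_def by auto
  have rholin: "\<forall>x\<in>N. Vector_Spaces.linear sW sW (\<rho> x)"
    using assms(6) unfolding is_rep_def by auto
  obtain T where Tlin: "Vector_Spaces.linear sW sW T" and Tbij: "bij T"
    and Tint: "\<forall>x\<in>N. T \<circ> conj_rep G (inv\<^bsub>G\<^esub> s) \<rho> x = \<rho> x \<circ> T"
    using si assms(8) unfolding rep_stabilizer_def iso_rep_def by auto
  have Tint2: "\<forall>x\<in>N. T \<circ> \<rho> (s \<otimes>\<^bsub>G\<^esub> x \<otimes>\<^bsub>G\<^esub> inv\<^bsub>G\<^esub> s) = \<rho> x \<circ> T"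
    using Tint sG unfolding conj_rep_def by simp
  have pn: "\<pi> n v \<in> common_kernel N sV \<pi> sW \<rho>"
    unfolding common_kernel_def
  proof (intro CollectI ballI)
    fix f assume f: "f \<in> hom_N N sV \<pi> sW \<rho>"
    then have "f (\<pi> n v) = \<rho> n (f v)" using n unfolding hom_N_def by auto
    also have "f v = 0" using v f unfolding common_kernel_def by auto
    finally show "f (\<pi> n v) = 0" using lin0[OF rholin[rule_format, OF n]] by simp
  qed
  define w where "w = \<pi> n v"
  have "\<pi> s w \<in> common_kernel N sV \<pi> sW \<rho>"
    unfolding common_kernel_def
  proof (intro CollectI ballI)
    fix f assume f: "f \<in> hom_N N sV \<pi> sW \<rho>"
    have flin: "Vector_Spaces.linear sV sW f" and feq: "\<forall>x\<in>N. \<forall>u. f (\<pi> x u) = \<rho> x (f u)"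
      using f unfolding hom_N_def by auto
    have "T \<circ> f \<circ> \<pi> s \<in> hom_N N sV \<pi> sW \<rho>"
      unfolding hom_N_def
    proof (intro CollectI conjI ballI allI)
      show "Vector_Spaces.linear sV sW (T \<circ> f \<circ> \<pi> s)"
        using Vector_Spaces.linear_compose[OF Vector_Spaces.linear_compose[OF piG[rule_format, OF sG] flin] Tlin]
        by (simp add: comp_assoc)
    next
      fix x u assume x: "x \<in> N"
      have xG: "x \<in> carrier G" using x NG by auto
      have cx: "s \<otimes>\<^bsub>G\<^esub> x \<otimes>\<^bsub>G\<^esub> inv\<^bsub>G\<^esub> s \<in> N" using assms(4) sM x by auto
      have "s \<otimes>\<^bsub>G\<^esub> x = (s \<otimes>\<^bsub>G\<^esub> x \<otimes>\<^bsub>G\<^esub> inv\<^bsub>G\<^esub> s) \<otimes>\<^bsub>G\<^esub> s"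
      proof -
        have "(s \<otimes>\<^bsub>G\<^esub> x \<otimes>\<^bsub>G\<^esub> inv\<^bsub>G\<^esub> s) \<otimes>\<^bsub>G\<^esub> s = (s \<otimes>\<^bsub>G\<^esub> x) \<otimes>\<^bsub>G\<^esub> (inv\<^bsub>G\<^esub> s \<otimes>\<^bsub>G\<^esub> s)"
          using sG xG by (intro G.m_assoc) auto
        also have "\<dots> = s \<otimes>\<^bsub>G\<^esub> x" using sG xG by (simp add: G.l_inv)
        finally show ?thesis by (rule sym)
      qed
      note A = this
      have B: "\<pi> (s \<otimes>\<^bsub>G\<^esub> x) = \<pi> s \<circ> \<pi> x" using pimul sG xG by simp
      have C: "\<pi> ((s \<otimes>\<^bsub>G\<^esub> x \<otimes>\<^bsub>G\<^esub> inv\<^bsub>G\<^esub> s) \<otimes>\<^bsub>G\<^esub> s) = \<pi> (s \<otimes>\<^bsub>G\<^esub> x \<otimes>\<^bsub>G\<^esub> inv\<^bsub>G\<^esub> s) \<circ> \<pi> s"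
        using pimul sG cx NG by (simp add: subsetD)
      have "\<pi> s (\<pi> x u) = \<pi> (s \<otimes>\<^bsub>G\<^esub> x \<otimes>\<^bsub>G\<^esub> inv\<^bsub>G\<^esub> s) (\<pi> s u)"
      proof -
        have "\<pi> s (\<pi> x u) = \<pi> (s \<otimes>\<^bsub>G\<^esub> x) u" using B by simp
        also have "\<dots> = \<pi> ((s \<otimes>\<^bsub>G\<^esub> x \<otimes>\<^bsub>G\<^esub> inv\<^bsub>G\<^esub> s) \<otimes>\<^bsub>G\<^esub> s) u" using A by (rule arg_cong)
        also have "\<dots> = \<pi> (s \<otimes>\<^bsub>G\<^esub> x \<otimes>\<^bsub>G\<^esub> inv\<^bsub>G\<^esub> s) (\<pi> s u)" using C by simp
        finally show ?thesis .
      qed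
      then have "f (\<pi> s (\<pi> x u)) = \<rho> (s \<otimes>\<^bsub>G\<^esub> x \<otimes>\<^bsub>G\<^esub> inv\<^bsub>G\<^esub> s) (f (\<pi> s u))"
        using feq cx by simp
      then show "(T \<circ> f \<circ> \<pi> s) (\<pi> x u) = \<rho> x ((T \<circ> f \<circ> \<pi> s) u)"
        using fun_cong[OF Tint2[rule_format, OF x], of "f (\<pi> s u)"] by simp
    qed
    then have "T (f (\<pi> s w)) = 0" using pn unfolding common_kernel_def w_def by auto
    moreover have "T 0 = 0" using lin0[OF Tlin] .
    ultimately show "f (\<pi> s w) = 0" using bij_is_inj[OF Tbij] by (metis injD)
  qed
  then show "\<pi> (s \<otimes>\<^bsub>G\<^esub> n) v \<in> common_kernel N sV \<pi> sW \<rho>"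
  proof -
    have "\<pi> (s \<otimes>\<^bsub>G\<^esub> n) = \<pi> s \<circ> \<pi> n" using pimul sG NG n by (simp add: subsetD)
    then show ?thesis using \<open>\<pi> s w \<in> _\<close> unfolding w_def by simp
  qed
qed

end
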